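(* Let $X$ be a real Banach space, $Y$ a closed subspace of $X$, $(\Omega,\Sigma,\mu)$ a complete probability space, $1\leq p<\infty$ and $n$ a positive integer. Let $f_1,\ldots,f_n\in L_p(\mu,X)$ and $g\in L_p(\mu,Y)$. If for almost all $s\in\Omega$, $g(s)$ is a relative $p$-center of $\{f_1(s),\ldots,f_n(s)\}$ in $Y$, then $g$ is a relative $p$-center of $\{f_1,\ldots,f_n\}\subset L_p(\mu,X)$ in $L_p(\mu,Y)$, i.e. $\sum_{i=1}^n\|f_i-g\|_p^p\leq\sum_{i=1}^n\|f_i-h\|_p^p$ for all $h\in L_p(\mu,Y)$.
   Context: $L_p(\mu,X)$ denotes the Banach space of Bochner $p$-integrable functions $\Omega\to X$ with norm $\|f\|_p=(\int_\Omega\|f(s)\|^p\,d\mu(s))^{1/p}$, and $L_p(\mu,Y)$ the subspace of those with values in $Y$. For a subset $Y$ of a normed space $X$, a finite set $\{a_1,\ldots,a_n\}\subset X$ and $m\in[1,\infty)$, a point $y_0\in Y$ is a relative $m$-center of $\{a_1,\ldots,a_n\}$ in $Y$ if $\sum_{i=1}^n\|a_i-y_0\|^m\leq\sum_{i=1}^n\|a_i-y\|^m$ for all $y\in Y$. *)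

theory Defs
  imports "HOL-Probability.Probability"
begin

definition strongly_measurable :: "'s measure \<Rightarrow> ('s \<Rightarrow> 'a::real_normed_vector) \<Rightarrow> bool" where
  "strongly_measurable M f \<longleftrightarrow> f \<in> borel_measurable M \<and>
     (\<exists>u::nat \<Rightarrow> 's \<Rightarrow> 'a. (\<forall>i. simple_function M (u i)) \<and>
        (\<forall>x\<in>space M. (\<lambda>i. u i x) \<longlonglongrightarrow> f x))"

text \<open>Bochner p-integrable functions with values in a subset Y (L_p(mu,Y));
  L_p(mu,X) is the case Y = UNIV.\<close>
definition Lp :: "'s measure \<Rightarrow> real \<Rightarrow> 'a::real_normed_vector set \<Rightarrow> ('s \<Rightarrow> 'a) set" where
  "Lp M p Y = {f. strongly_measurable M f \<and> (\<forall>s\<in>space M. f s \<in> Y) \<and>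
                  integrable M (\<lambda>s. norm (f s) powr p)}"

definition Lp_norm :: "'s measure \<Rightarrow> real \<Rightarrow> ('s \<Rightarrow> 'a::real_normed_vector) \<Rightarrow> real" where
  "Lp_norm M p f = (\<integral>s. norm (f s) powr p \<partial>M) powr (1 / p)"

definition relative_center ::
    "('a::minus \<Rightarrow> real) \<Rightarrow> real \<Rightarrow> 'a set \<Rightarrow> nat \<Rightarrow> (nat \<Rightarrow> 'a) \<Rightarrow> 'a \<Rightarrow> bool" where
  "relative_center nrm m Y n a y0 \<longleftrightarrow> y0 \<in> Y \<and>
     (\<forall>y\<in>Y. (\<Sum>i\<in>{1..n}. nrm (a i - y0) powr m) \<le> (\<Sum>i\<in>{1..n}. nrm (a i - y) powr m))"

end

theory Submission
  imports Defs
begin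

lemma powr_sum_bound:
  fixes a b p :: real
  assumes "0 \<le> a" "0 \<le> b" "0 \<le> p"
  shows "(a + b) powr p \<le> 2 powr p * (a powr p + b powr p)"
proof -
  have "(a + b) powr p \<le> (2 * max a b) powr p"
    using assms by (intro powr_mono2) auto
  also have "\<dots> = 2 powr p * max a b powr p"
    using assms by (simp add: powr_mult)
  also have "max a b powr p \<le> a powr p + b powr p"
    by (cases "a \<le> b") (auto simp: max_def)
  hence "2 powr p * max a b powr p \<le> 2 powr p * (a powr p + b powr p)"
    by (intro mult_left_mono) auto
  finally show ?thesis .
qed

lemma sm_diff_measurable:
  fixes f h :: "'s \<Rightarrow> 'a::real_normed_vector"
  assumes "strongly_measurable M f" "strongly_measurable M h"
  shows "(\<lambda>s. f s - h s) \<in> borel_measurable M"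
proof -
  obtain u where u: "\<And>i. simple_function M (u i)" "\<And>x. x \<in> space M \<Longrightarrow> (\<lambda>i. u i x) \<longlonglongrightarrow> f x"
    using assms(1) unfolding strongly_measurable_def by blast
  obtain v where v: "\<And>i. simple_function M (v i)" "\<And>x. x \<in> space M \<Longrightarrow> (\<lambda>i. v i x) \<longlonglongrightarrow> h x"
    using assms(2) unfolding strongly_measurable_def by blast
  show ?thesis
  proof (rule borel_measurable_LIMSEQ_metric[where f="\<lambda>i s. u i s - v i s"])
    fix i show "(\<lambda>s. u i s - v i s) \<in> borel_measurable M"
      by (rule borel_measurable_simple_function) (use u v in auto)
  next
    fix x assume "x \<in> space M"
    thus "(\<lambda>i. u i x - v i x) \<longlonglongrightarrow> f x - h x"
      using u v by (intro tendsto_diff) auto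
  qed
qed

lemma Lp_diff_integrable:
  fixes f h :: "'s \<Rightarrow> 'a::real_normed_vector"
  assumes "f \<in> Lp M p A" "h \<in> Lp M p B" "1 \<le> p"
  shows "integrable M (\<lambda>s. norm (f s - h s) powr p)"
proof -
  have sf: "strongly_measurable M f" and sh: "strongly_measurable M h"
    and if1: "integrable M (\<lambda>s. norm (f s) powr p)"
    and ih: "integrable M (\<lambda>s. norm (h s) powr p)"
    using assms unfolding Lp_def by auto
  have dm: "(\<lambda>s. f s - h s) \<in> borel_measurable M"
    using sm_diff_measurable[OF sf sh] .
  have nm: "(\<lambda>s. norm (f s - h s)) \<in> borel_measurable M"
    using measurable_compose[OF dm borel_measurable_norm] by simp
  have pm: "(\<lambda>s. norm (f s - h s) powr p) \<in> borel_measurable M"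
    using nm by measurable
  show ?thesis
  proof (rule Bochner_Integration.integrable_bound[OF _ pm])
    show "integrable M (\<lambda>s. 2 powr p * (norm (f s) powr p + norm (h s) powr p))"
      using if1 ih by auto
    show "AE x in M. norm (norm (f x - h x) powr p)
        \<le> norm (2 powr p * (norm (f x) powr p + norm (h x) powr p))"
    proof (intro AE_I2)
      fix x
      have "norm (f x - h x) powr p \<le> (norm (f x) + norm (h x)) powr p"
        using assms(3) by (intro powr_mono2) (auto intro: norm_triangle_ineq4)
      also have "\<dots> \<le> 2 powr p * (norm (f x) powr p + norm (h x) powr p)"
        using assms(3) by (intro powr_sum_bound) auto
      finally show "norm (norm (f x - h x) powr p)
        \<le> norm (2 powr p * (norm (f x) powr p + norm (h x) powr p))"
        by simp
    qed
  qed
qed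

lemma Lp_norm_powr:
  assumes "1 \<le> p"
  shows "Lp_norm M p (f - h) powr p = (\<integral>s. norm (f s - h s) powr p \<partial>M)"
proof -
  have "0 \<le> (\<integral>s. norm (f s - h s) powr p \<partial>M)"
    by (intro integral_nonneg_AE) auto
  thus ?thesis using assms
    by (simp add: Lp_norm_def powr_powr)
qed

theorem mainTheorem3:
  fixes M :: "'s measure" and Y :: "'a::banach set" and p :: real and n :: nat
    and f :: "nat \<Rightarrow> 's \<Rightarrow> 'a" and g :: "'s \<Rightarrow> 'a"
  assumes "subspace Y" and "closed Y"
    and "prob_space M" and "complete_measure M"
    and "1 \<le> p"
    and "n \<ge> 1"
    and "\<forall>i\<in>{1..n}. f i \<in> Lp M p UNIV"
    and "g \<in> Lp M p Y"
    and "AE s in M. relative_center norm p Y n (\<lambda>i. f i s) (g s)"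
  shows "relative_center (Lp_norm M p) p (Lp M p Y) n f g"
  unfolding relative_center_def
proof (intro conjI ballI)
  show "g \<in> Lp M p Y" by fact
  fix h assume h: "h \<in> Lp M p Y"
  have hY: "\<And>s. s \<in> space M \<Longrightarrow> h s \<in> Y" using h unfolding Lp_def by auto
  have ig: "\<And>i. i \<in> {1..n} \<Longrightarrow> integrable M (\<lambda>s. norm (f i s - g s) powr p)"
    using assms(5,7,8) by (intro Lp_diff_integrable) auto
  have ih: "\<And>i. i \<in> {1..n} \<Longrightarrow> integrable M (\<lambda>s. norm (f i s - h s) powr p)"
    using assms(5,7) h by (intro Lp_diff_integrable) auto
  have "(\<Sum>i\<in>{1..n}. Lp_norm M p (f i - g) powr p)
      = (\<Sum>i\<in>{1..n}. (\<integral>s. norm (f i s - g s) powr p \<partial>M))"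
    using assms(5) by (simp add: Lp_norm_powr)
  also have "\<dots> = (\<integral>s. (\<Sum>i\<in>{1..n}. norm (f i s - g s) powr p) \<partial>M)"
    using ig by (rule Bochner_Integration.integral_sum[symmetric])
  also have "\<dots> \<le> (\<integral>s. (\<Sum>i\<in>{1..n}. norm (f i s - h s) powr p) \<partial>M)"
  proof (rule integral_mono_AE)
    show "integrable M (\<lambda>s. \<Sum>i\<in>{1..n}. norm (f i s - g s) powr p)"
      using ig by auto
    show "integrable M (\<lambda>s. \<Sum>i\<in>{1..n}. norm (f i s - h s) powr p)"
      using ih by auto
    show "AE s in M. (\<Sum>i\<in>{1..n}. norm (f i s - g s) powr p)
        \<le> (\<Sum>i\<in>{1..n}. norm (f i s - h s) powr p)"
      using assms(9)
    proof (rule AE_mp)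
      show "AE s in M. relative_center norm p Y n (\<lambda>i. f i s) (g s) \<longrightarrow>
          (\<Sum>i\<in>{1..n}. norm (f i s - g s) powr p) \<le> (\<Sum>i\<in>{1..n}. norm (f i s - h s) powr p)"
        using hY by (intro AE_I2) (auto simp: relative_center_def)
    qed
  qed
  also have "\<dots> = (\<Sum>i\<in>{1..n}. (\<integral>s. norm (f i s - h s) powr p \<partial>M))"
    using ih by (rule Bochner_Integration.integral_sum)
  also have "\<dots> = (\<Sum>i\<in>{1..n}. Lp_norm M p (f i - h) powr p)"
    using assms(5) by (simp add: Lp_norm_powr)
  finally show "(\<Sum>i\<in>{1..n}. Lp_norm M p (f i - g) powr p)
      \<le> (\<Sum>i\<in>{1..n}. Lp_norm M p (f i - h) powr p)" .
qed

end
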